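(* For every $n\ge0$, $$R_{2n}(t,c)=\frac{q_{2n}(\lambda_0,c)}{(4\lambda_0^3-c)^{5n+2}},\qquad R_{2n+1}(t,c)=\frac{\lambda_0^{1/2}\,q_{2n+1}(\lambda_0,c)}{(4\lambda_0^3-c)^{5n+9/2}},$$ for some polynomials $q_{2n},q_{2n+1}\in\mathbb C[\lambda_0,c]$ whose degrees in $\lambda_0$ are at most $9n+4$ and $9n+8$ respectively (the square roots being the branches consistent with $R_{-1}=\sqrt\Delta=\lambda_0^{-1/2}(4\lambda_0^3-c)^{1/2}$).
   Context: Let $\eta$ be a large parameter and $c\in\mathbb C$. $(H_{\rm II})$: $\frac{d\lambda}{dt}=\eta\nu$, $\frac{d\nu}{dt}=\eta(2\lambda^3+t\lambda+c)$. Let $\lambda_0(t,c)$ be a branch of $2\lambda_0^3+t\lambda_0+c=0$, so that $\Delta:=6\lambda_0^2+t=(4\lambda_0^3-c)/\lambda_0$. The 0-parameter solution $\lambda^{(0)}=\sum_{k\ge0}\eta^{-k}\lambda^{(0)}_k$, $\nu^{(0)}$ is the formal power series solution of $(H_{\rm II})$ with $\lambda^{(0)}_0=\lambda_0$, $\nu^{(0)}_0=0$. $R=\sum_{k\ge-1}\eta^{-k}R_k(t,c)$ is the formal solution of $R^2+\frac{dR}{dt}=\eta^2(6(\lambda^{(0)})^2+t)$ with $R_{-1}=\sqrt\Delta$, i.e. $R_{-1}^2=\Delta$ and $2R_{-1}R_{k+1}+\sum_{k_1+k_2=k,\,k_j\ge0}R_{k_1}R_{k_2}+\frac{dR_k}{dt}=6\sum_{l_1+l_2=k+2,\,l_j\ge0}\lambda^{(0)}_{l_1}\lambda^{(0)}_{l_2}$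 for $k\ge-1$ (the $l_1+l_2=k+2$ sum excluding nothing, with the $k=-1$ case reading $2R_{-1}R_0+\frac{dR_{-1}}{dt}=0$ after cancelling $R_{-1}^2=6\lambda_0^2+t$). *)

theory Defs
  imports "HOL-Analysis.Analysis" "HOL-Computational_Algebra.Polynomial"
begin

text \<open>A polynomial in C[lambda0, c] is represented as a polynomial in lambda0 whose
  coefficients are polynomials in c; its degree in lambda0 is its (outer) degree.\<close>
definition eval2 :: "complex poly poly \<Rightarrow> complex \<Rightarrow> complex \<Rightarrow> complex" where
  "eval2 q x c = poly (map_poly (\<lambda>p. poly p c) q) x"

text \<open>Coefficient equations of the 0-parameter formal solution
  lambda = sum eta^(-k) lam k, nu = sum eta^(-k) nu k of (H_II) on an open set U of t-values
  (c fixed): order eta^1 gives nu_0 = 0 and the cubic for lam_0; order eta^(-k), k >= 0,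
  gives lam_k' = nu_(k+1) and nu_k' = 2 sum_(a+b+d=k+1) lam_a lam_b lam_d + t lam_(k+1).\<close>
definition zero_param_sol ::
  "complex \<Rightarrow> complex set \<Rightarrow> (nat \<Rightarrow> complex \<Rightarrow> complex) \<Rightarrow> (nat \<Rightarrow> complex \<Rightarrow> complex) \<Rightarrow> bool" where
  "zero_param_sol c U lam nu \<longleftrightarrow>
     (\<forall>k. lam k holomorphic_on U \<and> nu k holomorphic_on U) \<and>
     (\<forall>t\<in>U. nu 0 t = 0 \<and> 2 * (lam 0 t)^3 + t * lam 0 t + c = 0) \<and>
     (\<forall>k. \<forall>t\<in>U.
        deriv (lam k) t = nu (Suc k) t \<and>
        deriv (nu k) t =
          2 * (\<Sum>a\<le>Suc k. \<Sum>b\<le>Suc k - a. lam a t * lam b t * lam (Suc k - a - b) t)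
          + t * lam (Suc k) t)"

text \<open>Coefficient equations of R = sum_(k >= -1) eta^(-k) R_k solving
  R^2 + R' = eta^2 (6 lambda^2 + t). Here Rm1 is R_(-1) and R k is R_k for k >= 0.\<close>
definition R_sol ::
  "complex set \<Rightarrow> (nat \<Rightarrow> complex \<Rightarrow> complex) \<Rightarrow> (complex \<Rightarrow> complex) \<Rightarrow> (nat \<Rightarrow> complex \<Rightarrow> complex) \<Rightarrow> bool" where
  "R_sol U lam Rm1 R \<longleftrightarrow>
     Rm1 holomorphic_on U \<and> (\<forall>k. R k holomorphic_on U) \<and>
     (\<forall>t\<in>U. (Rm1 t)^2 = 6 * (lam 0 t)^2 + t) \<and>
     (\<forall>t\<in>U. 2 * Rm1 t * R 0 t + deriv Rm1 t = 0) \<and>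
     (\<forall>k. \<forall>t\<in>U.
        2 * Rm1 t * R (Suc k) t + (\<Sum>k1\<le>k. R k1 t * R (k - k1) t) + deriv (R k) t
        = 6 * (\<Sum>l1\<le>k+2. lam l1 t * lam (k + 2 - l1) t))"

end

theory Submission
  imports Defs
begin


lemma eval2_pCons: "eval2 (pCons a p) x c = poly a c + x * eval2 p x c"
  unfolding eval2_def by (simp add: map_poly_pCons)

lemma eval2_0[simp]: "eval2 0 x c = 0" unfolding eval2_def by simp

lemma eval2_add[simp]: "eval2 (p + q) x c = eval2 p x c + eval2 q x c"
proof (induction p arbitrary: q)
  case (pCons a p)
  obtain b q' where q: "q = pCons b q'" by (cases q) auto
  show ?case using pCons.IH[of q'] by (simp add: q eval2_pCons algebra_simps)
qed simp

lemma eval2_smult[simp]: "eval2 (smult a p) x c = poly a c * eval2 p x c"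
  unfolding eval2_def by (simp add: map_poly_smult)

lemma eval2_mult[simp]: "eval2 (p * q) x c = eval2 p x c * eval2 q x c"
proof (induction p)
  case (pCons a p)
  show ?case using pCons by (simp add: eval2_pCons algebra_simps)
qed simp

lemma eval2_minus[simp]: "eval2 (- p) x c = - eval2 p x c"
  using eval2_add[of p "-p" x c] by (simp add: add_eq_0_iff)

lemma eval2_diff[simp]: "eval2 (p - q) x c = eval2 p x c - eval2 q x c"
  using eval2_add[of p "-q" x c] by simp

lemma eval2_const[simp]: "eval2 [:a:] x c = poly a c"
  by (simp add: eval2_pCons)

lemma eval2_1[simp]: "eval2 1 x c = 1"
  by (simp add: one_pCons eval2_pCons)

lemma eval2_power[simp]: "eval2 (p ^ n) x c = eval2 p x c ^ n"
  by (induction n) auto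

lemma eval2_sum: "eval2 (sum f S) x c = (\<Sum>i\<in>S. eval2 (f i) x c)"
  by (induction S rule: infinite_finite_induct) auto

lemma map_poly_pderiv2:
  "map_poly (\<lambda>p. poly p c) (pderiv P) = pderiv (map_poly (\<lambda>p. poly p c) P)"
  by (rule poly_eqI) (simp add: coeff_map_poly coeff_pderiv)

lemma eval2_DERIV:
  "((\<lambda>y. eval2 P y c) has_field_derivative eval2 (pderiv P) x c) (at x)"
  unfolding eval2_def map_poly_pderiv2 by (rule poly_DERIV)

definition Xp :: "complex poly poly" where "Xp = [:0, 1:]"
definition Dp :: "complex poly poly" where "Dp = [:-[:0,1:], 0, 0, 4:]"

lemma eval2_Xp[simp]: "eval2 Xp x c = x" by (simp add: Xp_def eval2_pCons)
lemma eval2_Dp[simp]: "eval2 Dp x c = 4 * x^3 - c"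
  by (simp add: Dp_def eval2_pCons algebra_simps power3_eq_cube)

lemma degree_Xp[simp]: "degree Xp = 1" by (simp add: Xp_def)
lemma degree_Dp[simp]: "degree Dp = 3" by (simp add: Dp_def)

definition dv :: "nat \<Rightarrow> complex poly poly \<Rightarrow> complex poly poly" where
  "dv m P = - (Xp^2 * (pderiv P * Dp - smult (of_nat (12*m)) (Xp^2 * P)))"

definition ex :: "nat \<Rightarrow> nat" where "ex k = (if k = 0 then 0 else 5*(k div 2) - 1)"
definition rex :: "nat \<Rightarrow> nat" where
  "rex k = (if even k then 5*(k div 2) + 2 else 5*(k div 2) + 5)"

fun Lp :: "nat \<Rightarrow> complex poly poly" where
  "Lp 0 = Xp"
| "Lp (Suc k) = (if even k then 0 else
     Xp * (dv (if k - 1 = 0 then 1 else ex (k-1) + 2)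
               (if k - 1 = 0 then -(Xp^2) else dv (ex (k-1)) (Lp (k-1)))
          - smult 2 (\<Sum>a\<le>Suc k. \<Sum>b\<le>Suc k - a.
               (if a \<le> k \<and> b \<le> k \<and> Suc k - a - b \<le> k
                then Lp a * Lp b * Lp (Suc k - a - b) * Dp ^ (ex (Suc k) - 1 - (ex a + ex b + ex (Suc k - a - b)))
                else 0))))"

definition Rp0 :: "complex poly poly" where "Rp0 = [:0, [:0, 1/4:], 0, 0, 2:]"

fun Rp :: "nat \<Rightarrow> complex poly poly" where
  "Rp 0 = Rp0"
| "Rp (Suc k) = (if even k then
      smult [:1/2:] (smult [:6:] (\<Sum>l\<le>k+2. Lp l * Lp (k+2-l) * Dp ^ (rex k + 2 - ex l - ex (k+2-l)))
        - (\<Sum>k1\<le>k. if even k1 then Rp k1 * Rp (k-k1) else Xp * Rp k1 * Rp (k-k1))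
        - dv (rex k) (Rp k))
    else smult [:-1/2:] (Xp * (\<Sum>k1\<le>k. Rp k1 * Rp (k-k1)) - smult [:2:] (Rp0 * Xp * Rp k)
        + dv (rex k) (Xp * Rp k)))"

lemma degree_dv: "degree (dv m P) \<le> degree P + 4"
proof -
  have x2: "degree (Xp^2) \<le> 2" using degree_power_le[of Xp 2] by simp
  have a: "degree (pderiv P * Dp) \<le> degree P + 2"
  proof (cases "degree P = 0")
    case True then have "pderiv P = 0" by (simp add: pderiv_eq_0_iff)
    then show ?thesis by simp
  next
    case False
    have "degree (pderiv P * Dp) \<le> degree (pderiv P) + 3"
      using degree_mult_le[of "pderiv P" Dp] by simp
    then show ?thesis using False by (simp add: degree_pderiv)
  qed
  have b: "degree (smult (of_nat (12*m)) (Xp^2 * P)) \<le> degree P + 2"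
    using degree_smult_le[of "of_nat (12*m)" "Xp^2 * P"] degree_mult_le[of "Xp^2" P] x2 by linarith
  have "degree (pderiv P * Dp - smult (of_nat (12*m)) (Xp^2 * P)) \<le> degree P + 2"
    using degree_diff_le[OF a b] .
  then have "degree (Xp^2 * (pderiv P * Dp - smult (of_nat (12*m)) (Xp^2 * P))) \<le> degree P + 4"
    using degree_mult_le[of "Xp^2" "pderiv P * Dp - smult (of_nat (12*m)) (Xp^2 * P)"] x2 by linarith
  then show ?thesis unfolding dv_def by (simp only: degree_minus)
qed

lemma degree_Dp_pow: "degree (Dp ^ j) \<le> 3 * j"
  using degree_power_le[of Dp j] by simp

lemma degree_mult3_le: "degree (p * q) \<le> a \<Longrightarrow> degree r \<le> b \<Longrightarrow> degree (p * q * r) \<le> a + b"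
  using degree_mult_le[of "p*q" r] by linarith

lemma degree_mult_le': "degree p \<le> a \<Longrightarrow> degree q \<le> b \<Longrightarrow> degree (p * q) \<le> a + b"
  using degree_mult_le[of p q] by linarith

lemma ex_even: "ex (2*j) = (if j = 0 then 0 else 5*j - 1)" by (simp add: ex_def)

lemma ex3: assumes "a + b + d = Suc m" "a \<le> m" "b \<le> m" "d \<le> m"
  shows "ex (2*a) + ex (2*b) + ex (2*d) \<le> 5*m + 3"
  using assms by (simp add: ex_even) linarith

lemma ex2: assumes "a + b = Suc n"
  shows "ex (2*a) + ex (2*b) \<le> 5*n + 4"
  using assms by (simp add: ex_even) linarith

lemma Lp_props: "(odd k \<longrightarrow> Lp k = 0) \<and> (even k \<longrightarrow> degree (Lp k) + 3*k \<le> 3*ex k + 1)"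
proof (induction k rule: less_induct)
  case (less k)
  show ?case
  proof (cases k)
    case 0 then show ?thesis by (simp add: ex_def)
  next
    case (Suc j)
    show ?thesis
    proof (cases "even j")
      case True then show ?thesis using Suc by simp
    next
      case False
      then obtain m where j: "j = 2*m + 1" by (metis oddE)
      have IHz: "\<And>i. i < k \<Longrightarrow> odd i \<Longrightarrow> Lp i = 0" using less.IH by blast
      have IHd: "\<And>i. i < k \<Longrightarrow> even i \<Longrightarrow> degree (Lp i) + 3*i \<le> 3*ex i + 1" using less.IH by blast
      define D1 where "D1 = (if j - 1 = 0 then -(Xp^2) else dv (ex (j-1)) (Lp (j-1)))"
      define TS where "TS = (\<Sum>a\<le>Suc j. \<Sum>b\<le>Suc j - a.
               (if a \<le> j \<and> b \<le> j \<and> Suc j - a - b \<le> j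
                then Lp a * Lp b * Lp (Suc j - a - b) * Dp ^ (ex (Suc j) - 1 - (ex a + ex b + ex (Suc j - a - b)))
                else 0))"
      have LpS: "Lp k = Xp * (dv (if j - 1 = 0 then 1 else ex (j-1) + 2) D1 - smult 2 TS)"
        using False Suc by (simp add: D1_def TS_def)
      have dD1: "degree D1 \<le> 9*m + 2"
      proof (cases "m = 0")
        case True then show ?thesis using j degree_power_le[of Xp 2] by (simp add: D1_def)
      next
        case False
        have "degree (Lp (2*m)) + 3*(2*m) \<le> 3*ex (2*m) + 1" using IHd[of "2*m"] Suc j by simp
        then have "degree (Lp (2*m)) \<le> 9*m - 2" using False by (simp add: ex_even)
        then show ?thesis using j False degree_dv[of "ex (2*m)" "Lp (2*m)"] by (simp add: D1_def)
      qed
      have dTS: "degree TS \<le> 9*m + 6"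
        unfolding TS_def
      proof (rule degree_sum_le[OF finite_atMost], rule degree_sum_le[OF finite_atMost])
        fix a b assume a: "a \<in> {..Suc j}" and b: "b \<in> {..Suc j - a}"
        define d where "d = Suc j - a - b"
        have abd: "a + b + d = Suc j" using a b by (simp add: d_def)
        show "degree (if a \<le> j \<and> b \<le> j \<and> Suc j - a - b \<le> j
                then Lp a * Lp b * Lp (Suc j - a - b) * Dp ^ (ex (Suc j) - 1 - (ex a + ex b + ex (Suc j - a - b)))
                else 0) \<le> 9*m + 6"
        proof (cases "a \<le> j \<and> b \<le> j \<and> d \<le> j")
          case False then show ?thesis unfolding d_def[symmetric] by auto
        next
          case True
          show ?thesis
          proof (cases "odd a \<or> odd b \<or> odd d")
            case True
            then have "Lp a * Lp b * Lp d = 0" using IHz[of a] IHz[of b] IHz[of d] \<open>a \<le> j \<and> b \<le> j \<and> d \<le> j\<close> Suc by auto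
            then show ?thesis unfolding d_def[symmetric] by auto
          next
            case False
            then obtain a' b' d' where ev: "a = 2*a'" "b = 2*b'" "d = 2*d'" by (auto elim!: evenE)
            have s: "a' + b' + d' = Suc m" using abd ev j by simp
            have le: "a' \<le> m" "b' \<le> m" "d' \<le> m" using True ev j by auto
            have e3: "ex a + ex b + ex d \<le> 5*m + 3" using ex3[OF s le] ev by simp
            have exS: "ex (Suc j) = 5*m + 4" using j by (simp add: ex_def)
            have da: "degree (Lp a) + 3*a \<le> 3*ex a + 1" using IHd[of a] True Suc ev by simp
            have db: "degree (Lp b) + 3*b \<le> 3*ex b + 1" using IHd[of b] True Suc ev by simp
            have dd: "degree (Lp d) + 3*d \<le> 3*ex d + 1" using IHd[of d] True Suc ev by simp
            have "degree (Lp a * Lp b * Lp d * Dp ^ (ex (Suc j) - 1 - (ex a + ex b + ex d)))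
                  \<le> degree (Lp a) + degree (Lp b) + degree (Lp d) + 3 * (ex (Suc j) - 1 - (ex a + ex b + ex d))"
              by (intro degree_mult_le' degree_Dp_pow) (intro degree_mult_le' order_refl)+
            also have "\<dots> \<le> 9*m + 6" using da db dd e3 exS abd j by linarith
            finally show ?thesis unfolding d_def[symmetric] using True by simp
          qed
        qed
      qed
      have "degree (dv (if j - 1 = 0 then 1 else ex (j-1) + 2) D1 - smult 2 TS) \<le> 9*m + 6"
        using degree_diff_le[OF order_trans[OF degree_dv] order_trans[OF degree_smult_le dTS]] dD1 by simp
      then have "degree (Lp k) \<le> 9*m + 7"
        unfolding LpS using degree_mult_le'[of Xp 1] by fastforce
      moreover have "ex k = 5*m + 4" using Suc j by (simp add: ex_def)
      ultimately show ?thesis using Suc j by simp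
    qed
  qed
qed

lemma Lp_odd: "odd k \<Longrightarrow> Lp k = 0" using Lp_props by blast
lemma Lp_deg: "even k \<Longrightarrow> degree (Lp k) + 3*k \<le> 3*ex k + 1" using Lp_props by blast

definition rb :: "nat \<Rightarrow> nat" where "rb k = (if even k then 9*(k div 2)+4 else 9*(k div 2)+8)"

lemma degree_Rp0: "degree Rp0 = 4" by (simp add: Rp0_def)

lemma LS_deg: assumes "j = 2*n"
  shows "degree (\<Sum>l\<le>j+2. Lp l * Lp (j+2-l) * Dp ^ (rex j + 2 - ex l - ex (j+2-l))) \<le> 9*n+8"
proof (rule degree_sum_le[OF finite_atMost])
  fix l assume l: "l \<in> {..j+2}"
  show "degree (Lp l * Lp (j+2-l) * Dp ^ (rex j + 2 - ex l - ex (j+2-l))) \<le> 9*n+8"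
  proof (cases "odd l")
    case True then show ?thesis by (simp add: Lp_odd)
  next
    case False
    then obtain a where a: "l = 2*a" by (auto elim!: evenE)
    have l2: "j + 2 - l = 2*(Suc n - a)" using a l assms by auto
    have e: "ex l + ex (j+2-l) \<le> 5*n + 4" using ex2[of a "Suc n - a" n] a l2 l assms by auto
    have r: "rex j = 5*n+2" using assms by (simp add: rex_def)
    have d1: "degree (Lp l) + 3*l \<le> 3*ex l + 1" using Lp_deg False by blast
    have d2: "degree (Lp (j+2-l)) + 3*(j+2-l) \<le> 3*ex (j+2-l) + 1" proof -
      have "even (j+2-l)" using l2 by simp
      then show ?thesis using Lp_deg[of "j+2-l"] by blast
    qed
    have "degree (Lp l * Lp (j+2-l) * Dp ^ (rex j + 2 - ex l - ex (j+2-l)))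
          \<le> degree (Lp l) + degree (Lp (j+2-l)) + 3*(rex j + 2 - ex l - ex (j+2-l))"
      by (intro degree_mult_le' degree_Dp_pow order_refl)
    also have "\<dots> \<le> 9*n+8" using d1 d2 e r l l2 a assms by linarith
    finally show ?thesis .
  qed
qed

lemma Rp_deg: "degree (Rp k) \<le> rb k"
proof (induction k rule: less_induct)
  case (less k)
  show ?case
  proof (cases k)
    case 0 then show ?thesis by (simp add: degree_Rp0 rb_def)
  next
    case (Suc j)
    have IH: "\<And>i. i \<le> j \<Longrightarrow> degree (Rp i) \<le> rb i" using less.IH Suc by simp
    show ?thesis
    proof (cases "even j")
      case True
      then obtain n where j: "j = 2*n" by (auto elim!: evenE)
      have RS: "degree (\<Sum>k1\<le>j. if even k1 then Rp k1 * Rp (j-k1) else Xp * Rp k1 * Rp (j-k1)) \<le> 9*n+8"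
      proof (rule degree_sum_le[OF finite_atMost])
        fix k1 assume k1: "k1 \<in> {..j}"
        show "degree (if even k1 then Rp k1 * Rp (j-k1) else Xp * Rp k1 * Rp (j-k1)) \<le> 9*n+8"
        proof (cases "even k1")
          case True
          then obtain a where a: "k1 = 2*a" by (auto elim!: evenE)
          have "j - k1 = 2*(n-a)" using a j by auto
          then have "rb k1 + rb (j-k1) = 9*n+8" using a k1 j by (simp add: rb_def)
          moreover have "degree (Rp k1 * Rp (j-k1)) \<le> rb k1 + rb (j-k1)"
            using k1 by (intro degree_mult_le' IH) auto
          ultimately show ?thesis using True by simp
        next
          case False
          then obtain a where a: "k1 = 2*a+1" by (metis oddE)
          have "j - k1 = 2*(n-a-1)+1" using a j k1 by auto
          then have "1 + rb k1 + rb (j-k1) = 9*n+8" using a k1 j by (simp add: rb_def)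
          moreover have "degree (Xp * Rp k1 * Rp (j-k1)) \<le> 1 + rb k1 + rb (j-k1)"
            using k1 by (intro degree_mult_le' IH) auto
          ultimately show ?thesis using False by simp
        qed
      qed
      have dv: "degree (dv (rex j) (Rp j)) \<le> 9*n+8"
        using degree_dv[of "rex j" "Rp j"] IH[of j] j by (simp add: rb_def)
      have "degree (smult [:6:] (\<Sum>l\<le>j+2. Lp l * Lp (j+2-l) * Dp ^ (rex j + 2 - ex l - ex (j+2-l)))) \<le> 9*n+8"
        using order_trans[OF degree_smult_le LS_deg[OF j]] .
      then have "degree (smult [:6:] (\<Sum>l\<le>j+2. Lp l * Lp (j+2-l) * Dp ^ (rex j + 2 - ex l - ex (j+2-l)))
        - (\<Sum>k1\<le>j. if even k1 then Rp k1 * Rp (j-k1) else Xp * Rp k1 * Rp (j-k1))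
        - dv (rex j) (Rp j)) \<le> 9*n+8"
        by (intro degree_diff_le RS dv)
      then have "degree (Rp k) \<le> 9*n+8" using Suc True
        by (simp only: Rp.simps if_True) (rule order_trans[OF degree_smult_le])
      then show ?thesis using Suc j by (simp add: rb_def)
    next
      case False
      then obtain n where j: "j = 2*n+1" by (metis oddE)
      have RS: "degree (\<Sum>k1\<le>j. Rp k1 * Rp (j-k1)) \<le> 9*n+12"
      proof (rule degree_sum_le[OF finite_atMost])
        fix k1 assume k1: "k1 \<in> {..j}"
        have "rb k1 + rb (j-k1) = 9*n+12"
        proof (cases "even k1")
          case True
          then obtain a where a: "k1 = 2*a" by (auto elim!: evenE)
          have "j - k1 = 2*(n-a)+1" using a j k1 by auto
          then show ?thesis using a k1 j by (simp add: rb_def)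
        next
          case False
          then obtain a where a: "k1 = 2*a+1" by (metis oddE)
          have "j - k1 = 2*(n-a)" using a j k1 by auto
          then show ?thesis using a k1 j by (simp add: rb_def)
        qed
        moreover have "degree (Rp k1 * Rp (j-k1)) \<le> rb k1 + rb (j-k1)"
            using k1 by (intro degree_mult_le' IH) auto
        ultimately show "degree (Rp k1 * Rp (j-k1)) \<le> 9*n+12" by simp
      qed
      have rj: "degree (Rp j) \<le> 9*n+8" using IH[of j] j by (simp add: rb_def)
      have t1: "degree (Xp * (\<Sum>k1\<le>j. Rp k1 * Rp (j-k1))) \<le> 9*n+13"
        using degree_mult_le'[OF _ RS, of Xp 1] by simp
      have t2: "degree (smult [:2:] (Rp0 * Xp * Rp j)) \<le> 9*n+13"
      proof -
        have "degree (Rp0 * Xp * Rp j) \<le> 4 + 1 + (9*n+8)"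
          by (intro degree_mult_le' rj) (auto simp: degree_Rp0)
        then show ?thesis using degree_smult_le[of "[:2:]" "Rp0 * Xp * Rp j"] by simp
      qed
      have t3: "degree (dv (rex j) (Xp * Rp j)) \<le> 9*n+13"
      proof -
        have "degree (Xp * Rp j) \<le> 1 + (9*n+8)" by (intro degree_mult_le' rj) auto
        then show ?thesis using degree_dv[of "rex j" "Xp * Rp j"] by simp
      qed
      have "degree (Xp * (\<Sum>k1\<le>j. Rp k1 * Rp (j-k1)) - smult [:2:] (Rp0 * Xp * Rp j)
        + dv (rex j) (Xp * Rp j)) \<le> 9*n+13"
        by (intro degree_add_le degree_diff_le t1 t2 t3)
      then have "degree (Rp k) \<le> 9*n+13" using Suc False
        by (simp only: Rp.simps if_False) (rule order_trans[OF degree_smult_le])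
      then show ?thesis using Suc j by (simp add: rb_def)
    qed
  qed
qed

lemma split3: fixes f :: "nat \<Rightarrow> 'a::comm_ring_1"
  shows "(\<Sum>a\<le>Suc k. \<Sum>b\<le>Suc k - a. f a * f b * f (Suc k - a - b)) =
    (\<Sum>a\<le>Suc k. \<Sum>b\<le>Suc k - a. if a \<le> k \<and> b \<le> k \<and> Suc k - a - b \<le> k then f a * f b * f (Suc k - a - b) else 0)
    + 3 * (f 0)^2 * f (Suc k)"
proof -
  let ?N = "Suc k" and ?K = "(f 0)^2 * f (Suc k)"
  have t: "f a * f b * f (?N - a - b) = (if a \<le> k \<and> b \<le> k \<and> ?N - a - b \<le> k then f a * f b * f (?N - a - b) else 0)
     + ((if a = ?N \<and> b = 0 then ?K else 0) + (if a = 0 \<and> b = ?N then ?K else 0) + (if a = 0 \<and> b = 0 then ?K else 0))"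
    if "a \<le> ?N" "b \<le> ?N - a" for a b
  proof (cases "a \<le> k \<and> b \<le> k \<and> ?N - a - b \<le> k")
    case True then show ?thesis using that by auto
  next
    case False
    have "(a = ?N \<and> b = 0) \<or> (a = 0 \<and> b = ?N) \<or> (a = 0 \<and> b = 0)" using False that by arith
    then consider "a = ?N" "b = 0" | "a = 0" "b = ?N" | "a = 0" "b = 0" by blast
    then show ?thesis by cases (auto simp: power2_eq_square algebra_simps)
  qed
  have s1: "(\<Sum>a\<le>?N. \<Sum>b\<le>?N - a. (if a = ?N \<and> b = 0 then ?K else 0)) = ?K"
    by (simp add: sum.If_cases)
  have s2: "(\<Sum>a\<le>?N. \<Sum>b\<le>?N - a. (if a = 0 \<and> b = ?N then ?K else 0)) = ?K"
    by (subst sum.atMost_Suc_shift) simp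
  have s3: "(\<Sum>a\<le>?N. \<Sum>b\<le>?N - a. (if a = 0 \<and> b = 0 then ?K else 0)) = ?K"
    by (subst sum.atMost_Suc_shift) simp
  have "(\<Sum>a\<le>?N. \<Sum>b\<le>?N - a. f a * f b * f (?N - a - b)) =
     (\<Sum>a\<le>?N. \<Sum>b\<le>?N - a. (if a \<le> k \<and> b \<le> k \<and> ?N - a - b \<le> k then f a * f b * f (?N - a - b) else 0)
     + ((if a = ?N \<and> b = 0 then ?K else 0) + (if a = 0 \<and> b = ?N then ?K else 0) + (if a = 0 \<and> b = 0 then ?K else 0)))"
    by (intro sum.cong refl t) auto
  also have "\<dots> = (\<Sum>a\<le>?N. \<Sum>b\<le>?N - a. (if a \<le> k \<and> b \<le> k \<and> ?N - a - b \<le> k then f a * f b * f (?N - a - b) else 0))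
     + ((\<Sum>a\<le>?N. \<Sum>b\<le>?N - a. (if a = ?N \<and> b = 0 then ?K else 0)) + (\<Sum>a\<le>?N. \<Sum>b\<le>?N - a. (if a = 0 \<and> b = ?N then ?K else 0))
       + (\<Sum>a\<le>?N. \<Sum>b\<le>?N - a. (if a = 0 \<and> b = 0 then ?K else 0)))"
    by (simp only: sum.distrib)
  also have "\<dots> = (\<Sum>a\<le>?N. \<Sum>b\<le>?N - a. (if a \<le> k \<and> b \<le> k \<and> ?N - a - b \<le> k then f a * f b * f (?N - a - b) else 0)) + 3 * ?K" unfolding s1 s2 s3 by simp
  finally show ?thesis by (simp add: algebra_simps)
qed

lemma frac3: fixes D :: complex assumes "D \<noteq> 0" "e1+e2+e3+p = N"
  shows "A/D^e1 * (B/D^e2) * (C/D^e3) = (A*B*C*D^p)/D^N"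
  using assms(1) unfolding assms(2)[symmetric] by (simp add: power_add field_simps)

lemma frac2: fixes D :: complex assumes "D \<noteq> 0" "e1+e2+p = N"
  shows "A/D^e1 * (B/D^e2) = (A*B*D^p)/D^N"
  using assms(1) unfolding assms(2)[symmetric] by (simp add: power_add field_simps)

locale sett =
  fixes c :: complex and U :: "complex set" and lam nu :: "nat \<Rightarrow> complex \<Rightarrow> complex"
    and Rm1 :: "complex \<Rightarrow> complex" and R :: "nat \<Rightarrow> complex \<Rightarrow> complex"
  assumes U: "open U" and zp: "zero_param_sol c U lam nu" and rs: "R_sol U lam Rm1 R"
    and nz: "\<forall>t\<in>U. lam 0 t \<noteq> 0 \<and> 6 * (lam 0 t)^2 + t \<noteq> 0"
begin

abbreviation E where "E P t \<equiv> eval2 P (lam 0 t) c"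
abbreviation Dt where "Dt t \<equiv> 4 * (lam 0 t)^3 - c"

lemma cubic: "t \<in> U \<Longrightarrow> 2 * (lam 0 t)^3 + t * lam 0 t + c = 0"
  using zp unfolding zero_param_sol_def by blast

lemma Dt_eq: "t \<in> U \<Longrightarrow> Dt t = lam 0 t * (6 * (lam 0 t)^2 + t)"
  using cubic[of t] by (simp add: algebra_simps power3_eq_cube power2_eq_square)

lemma Dt_nz: "t \<in> U \<Longrightarrow> Dt t \<noteq> 0"
  using Dt_eq[of t] nz by auto

lemma lam0_nz: "t \<in> U \<Longrightarrow> lam 0 t \<noteq> 0" using nz by auto

lemma lam0_deriv: assumes t: "t \<in> U"
  shows "(lam 0 has_field_derivative (- ((lam 0 t)^2) / Dt t)) (at t)"
proof -
  have hol: "lam 0 holomorphic_on U" using zp unfolding zero_param_sol_def by blast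
  have d: "(lam 0 has_field_derivative deriv (lam 0) t) (at t)"
    using holomorphic_on_imp_differentiable_at[OF hol U t] DERIV_deriv_iff_field_differentiable by blast
  let ?x = "lam 0 t" and ?x' = "deriv (lam 0) t"
  have g: "((\<lambda>s. 2 * (lam 0 s)^3 + s * lam 0 s + c) has_field_derivative
           2 * (3 * ?x^2 * ?x') + (?x + t * ?x')) (at t)"
    by (rule derivative_eq_intros d DERIV_ident refl | simp)+
  have g0: "((\<lambda>s. 2 * (lam 0 s)^3 + s * lam 0 s + c) has_field_derivative 0) (at t)"
    by (rule has_field_derivative_transform_within_open[OF DERIV_const U t]) (simp add: cubic)
  have "2 * (3 * ?x^2 * ?x') + (?x + t * ?x') = 0" using DERIV_unique[OF g g0] .
  moreover have "?x' * (6 * ?x^2 + t) = - ?x + (2 * (3 * ?x^2 * ?x') + (?x + t * ?x'))"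
    by (simp add: algebra_simps)
  ultimately have "?x' * (6 * ?x^2 + t) = - ?x" by simp
  then have "?x' = - ?x / (6 * ?x^2 + t)" using nz t by (simp add: field_simps)
  also have "\<dots> = - (?x^2) / Dt t"
    by (simp only: Dt_eq[OF t]) (use lam0_nz[OF t] in \<open>simp add: power2_eq_square\<close>)
  finally show ?thesis using d by simp
qed

lemma alg: fixes D :: complex
  assumes "D \<noteq> 0"
  shows "(A * D^m - B * (of_nat m * D^(m-1) * (12*x^2))) / (D^m * D^m) * (- (x^2)/D)
     = -(x^2*(A*D - of_nat(12*m)*(x^2*B)))/D^(m+2)"
proof (cases m)
  case 0 then show ?thesis using assms by (simp add: field_simps)
next
  case (Suc m')
  then show ?thesis using assms by (simp add: field_simps power2_eq_square)
qed

lemma key: assumes t: "t \<in> U"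
  shows "((\<lambda>s. E P s / Dt s ^ m) has_field_derivative E (dv m P) t / Dt t ^ (m+2)) (at t)"
proof -
  let ?x = "lam 0 t"
  define h where "h y = eval2 P y c / (4*y^3 - c)^m" for y
  have Dx: "4*?x^3 - c \<noteq> 0" using Dt_nz[OF t] .
  have dQ: "((\<lambda>y. (4*y^3 - c)^m) has_field_derivative of_nat m * (4*?x^3 - c)^(m-1) * (12 * ?x^2)) (at ?x)"
    by (rule derivative_eq_intros DERIV_ident refl | simp)+
  have dh: "(h has_field_derivative
      (eval2 (pderiv P) ?x c * (4*?x^3 - c)^m - eval2 P ?x c * (of_nat m * (4*?x^3 - c)^(m-1) * (12 * ?x^2)))
        / ((4*?x^3 - c)^m * (4*?x^3 - c)^m)) (at ?x)"
    unfolding h_def using DERIV_divide[OF eval2_DERIV dQ] Dx by simp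
  note ch = DERIV_chain2[OF dh lam0_deriv[OF t]]
  have eq: "(\<lambda>s. E P s / Dt s ^ m) = (\<lambda>s. h (lam 0 s))" by (simp add: h_def)
  have val: "(eval2 (pderiv P) ?x c * (4*?x^3 - c)^m - eval2 P ?x c * (of_nat m * (4*?x^3 - c)^(m-1) * (12 * ?x^2)))
        / ((4*?x^3 - c)^m * (4*?x^3 - c)^m) * (- (?x^2) / Dt t) = E (dv m P) t / Dt t ^ (m+2)"
  proof -
    have "E (dv m P) t = -(?x^2*(eval2 (pderiv P) ?x c*(4*?x^3-c) - of_nat(12*m)*(?x^2*eval2 P ?x c)))"
      by (simp add: dv_def)
    then show ?thesis by (simp only:) (rule alg[OF Dx])
  qed
  show ?thesis using ch unfolding eq val .
qed

lemma rep_deriv: assumes "\<forall>s\<in>U. f s = E P s / Dt s ^ m" "t \<in> U"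
  shows "(f has_field_derivative E (dv m P) t / Dt t ^ (m+2)) (at t)"
  using has_field_derivative_transform_within_open[OF key[OF assms(2)] U assms(2)] assms(1) by simp

lemma rep_deriv': assumes "\<forall>s\<in>U. f s = E P s / Dt s ^ m" "t \<in> U"
  shows "deriv f t = E (dv m P) t / Dt t ^ (m+2)"
  using DERIV_imp_deriv[OF rep_deriv[OF assms]] .

lemma zero_deriv: assumes "\<forall>s\<in>U. f s = 0" "t \<in> U" shows "deriv f t = 0"
  using DERIV_imp_deriv[OF has_field_derivative_transform_within_open[OF DERIV_const U assms(2)]] assms(1) by simp

lemma zp_nu0: "t \<in> U \<Longrightarrow> nu 0 t = 0" using zp unfolding zero_param_sol_def by blast
lemma zp_dl: "t \<in> U \<Longrightarrow> deriv (lam k) t = nu (Suc k) t" using zp unfolding zero_param_sol_def by blast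
lemma zp_dn: "t \<in> U \<Longrightarrow> deriv (nu k) t =
          2 * (\<Sum>a\<le>Suc k. \<Sum>b\<le>Suc k - a. lam a t * lam b t * lam (Suc k - a - b) t)
          + t * lam (Suc k) t" using zp unfolding zero_param_sol_def by blast

end



lemma lin: fixes d F T x L t :: complex
  shows "d = 2*F + t*L \<Longrightarrow> F = T + 3*x^2*L \<Longrightarrow> (6*x^2+t)*L = d - 2*T"
  by (simp add: algebra_simps)

lemma solveL: fixes L A B D x Del :: complex
  assumes "Del*L = A/D^n - 2*(B/D^n)" "D = x*Del" "x \<noteq> 0" "Del \<noteq> 0"
  shows "L = x*(A - 2*B)/D^(Suc n)"
proof -
  have D: "D \<noteq> 0" using assms by simp
  have h: "Del*L*D^n = A - 2*B" using assms(1) D by (simp add: field_simps)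
  have h2: "x*(A - 2*B) = L * D^(Suc n)" unfolding h[symmetric] assms(2)
    by (simp add: algebra_simps power_mult_distrib)
  show ?thesis using h2 D by (simp add: field_simps)
qed

context sett begin
lemma lam_rep: "\<forall>t\<in>U. lam k t = E (Lp k) t / Dt t ^ ex k"
proof (induction k rule: less_induct)
  case (less k)
  show ?case
  proof (cases k)
    case 0 then show ?thesis by (simp add: ex_def)
  next
    case (Suc j)
    have IH: "\<And>i s. i \<le> j \<Longrightarrow> s \<in> U \<Longrightarrow> lam i s = E (Lp i) s / Dt s ^ ex i"
    proof -
      fix i s assume h: "i \<le> j" "s \<in> U"
      then have "i < k" using Suc by simp
      then show "lam i s = E (Lp i) s / Dt s ^ ex i" using less.IH h(2) by blast
    qed
    have IHo: "\<And>i s. i \<le> j \<Longrightarrow> odd i \<Longrightarrow> s \<in> U \<Longrightarrow> lam i s = 0"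
      using IH Lp_odd by (metis div_0 eval2_0)
    show ?thesis
    proof
      fix t assume t: "t \<in> U"
      let ?x = "lam 0 t"
      let ?L = "lam (Suc j) t"
      define trunc where "trunc = (\<Sum>a\<le>Suc j. \<Sum>b\<le>Suc j - a.
          if a \<le> j \<and> b \<le> j \<and> Suc j - a - b \<le> j then lam a t * lam b t * lam (Suc j - a - b) t else 0)"
      have base: "(6 * ?x^2 + t) * ?L = deriv (nu j) t - 2 * trunc"
        using lin[OF zp_dn[OF t, of j] split3[of "\<lambda>i. lam i t" j]] unfolding trunc_def .
      have Dx: "Dt t = ?x * (6 * ?x^2 + t)" using Dt_eq[OF t] .
      have Dnz: "Dt t \<noteq> 0" using Dt_nz[OF t] .
      have Lnz: "6 * ?x^2 + t \<noteq> 0" using nz t by blast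
      show "lam k t = E (Lp k) t / Dt t ^ ex k"
      proof (cases "even j")
        case True
        have dnu: "deriv (nu j) t = 0"
        proof (cases j)
          case 0 then show ?thesis using zero_deriv[OF _ t, of "nu 0"] zp_nu0 by blast
        next
          case (Suc i)
          have "odd i" using True Suc by simp
          have "\<forall>s\<in>U. lam i s = 0" using IHo[of i] \<open>odd i\<close> Suc by simp
          then have "\<forall>s\<in>U. deriv (lam i) s = 0" using zero_deriv by blast
          then have "\<forall>s\<in>U. nu j s = 0" using zp_dl Suc by simp
          then show ?thesis using zero_deriv[OF _ t] by blast
        qed
        have "trunc = 0" unfolding trunc_def
        proof (intro sum.neutral ballI)
          fix a b assume a: "a \<in> {..Suc j}" and b: "b \<in> {..Suc j - a}"
          show "(if a \<le> j \<and> b \<le> j \<and> Suc j - a - b \<le> j then lam a t * lam b t * lam (Suc j - a - b) t else 0) = 0"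
          proof (cases "a \<le> j \<and> b \<le> j \<and> Suc j - a - b \<le> j")
            case c: True
            have "odd a \<or> odd b \<or> odd (Suc j - a - b)" using True a b by auto
            then show ?thesis using c IHo[OF _ _ t] by (elim disjE) auto
          qed auto
        qed
        then have "?L = 0" using base dnu Lnz by simp
        then show ?thesis using Suc True by simp
      next
        case False
        then obtain m where j: "j = 2*m+1" by (metis oddE)
        define i where "i = j - 1"
        have i: "i = 2*m" using j by (simp add: i_def)
        define D1 where "D1 = (if i = 0 then -(Xp^2) else dv (ex i) (Lp i))"
        define e1 where "e1 = (if i = 0 then 1 else ex i + 2)"
        define TS where "TS = (\<Sum>a\<le>Suc j. \<Sum>b\<le>Suc j - a.
               (if a \<le> j \<and> b \<le> j \<and> Suc j - a - b \<le> j
                then Lp a * Lp b * Lp (Suc j - a - b) * Dp ^ (ex (Suc j) - 1 - (ex a + ex b + ex (Suc j - a - b)))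
                else 0))"
        have LpS: "Lp k = Xp * (dv e1 D1 - smult 2 TS)"
          using False Suc by (simp add: D1_def TS_def e1_def i_def)
        have exS: "ex (Suc j) = 5*m + 4" using j by (simp add: ex_def)
        have e1v: "e1 + 2 = 5*m + 3" using i by (simp add: e1_def ex_def)
        have dl: "\<forall>s\<in>U. deriv (lam i) s = E D1 s / Dt s ^ e1"
        proof
          fix s assume s: "s \<in> U"
          show "deriv (lam i) s = E D1 s / Dt s ^ e1"
          proof (cases "i = 0")
            case True then show ?thesis using DERIV_imp_deriv[OF lam0_deriv[OF s]]
              by (simp add: D1_def e1_def)
          next
            case False
            have "\<forall>s\<in>U. lam i s = E (Lp i) s / Dt s ^ ex i" using IH[of i] i_def by simp
            from rep_deriv'[OF this s] show ?thesis using False by (simp add: D1_def e1_def)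
          qed
        qed
        have "\<forall>s\<in>U. nu j s = E D1 s / Dt s ^ e1" using dl zp_dl j i_def by simp
        from rep_deriv'[OF this t] have dnu: "deriv (nu j) t = E (dv e1 D1) t / Dt t ^ (5*m+3)"
          unfolding e1v .
        have tr: "trunc = E TS t / Dt t ^ (5*m+3)"
          unfolding trunc_def TS_def eval2_sum sum_divide_distrib
        proof (intro sum.cong refl)
          fix a b assume a: "a \<in> {..Suc j}" and b: "b \<in> {..Suc j - a}"
          define d where "d = Suc j - a - b"
          have abd: "a + b + d = Suc j" using a b by (simp add: d_def)
          show "(if a \<le> j \<and> b \<le> j \<and> Suc j - a - b \<le> j then lam a t * lam b t * lam (Suc j - a - b) t else 0) =
             eval2 (if a \<le> j \<and> b \<le> j \<and> Suc j - a - b \<le> j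
                then Lp a * Lp b * Lp (Suc j - a - b) * Dp ^ (ex (Suc j) - 1 - (ex a + ex b + ex (Suc j - a - b)))
                else 0) (lam 0 t) c / Dt t ^ (5*m+3)"
          proof (cases "a \<le> j \<and> b \<le> j \<and> d \<le> j")
            case c: True
            show ?thesis
            proof (cases "odd a \<or> odd b \<or> odd d")
              case True
              then show ?thesis unfolding d_def[symmetric] using c IHo[OF _ _ t] Lp_odd by (elim disjE) auto
            next
              case False
              then obtain a' b' d' where ev: "a = 2*a'" "b = 2*b'" "d = 2*d'" by (auto elim!: evenE)
              have s: "a' + b' + d' = Suc m" using abd ev j by simp
              have le: "a' \<le> m" "b' \<le> m" "d' \<le> m" using c ev j by auto
              have e3: "ex a + ex b + ex d \<le> 5*m + 3" using ex3[OF s le] ev by simp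
              have exS1: "ex (Suc j) - 1 - (ex a+ex b+ex d) = 5*m+3 - (ex a+ex b+ex d)" using exS by simp
              have "lam a t * lam b t * lam d t = E (Lp a) t / Dt t ^ ex a * (E (Lp b) t / Dt t ^ ex b) * (E (Lp d) t / Dt t ^ ex d)"
                using IH[of a t] IH[of b t] IH[of d t] c t by simp
              also have "\<dots> = E (Lp a) t * E (Lp b) t * E (Lp d) t * Dt t ^ (5*m+3 - (ex a + ex b + ex d)) / Dt t ^ (5*m+3)"
                using e3 by (intro frac3 Dnz) simp
              finally show ?thesis unfolding d_def[symmetric] exS1 using c by simp
            qed
          qed (auto simp: d_def)
        qed
        have "?L = ?x * (E (dv e1 D1) t - 2 * E TS t) / Dt t ^ Suc (5*m+3)"
          using solveL[OF base[unfolded dnu tr] Dx lam0_nz[OF t] Lnz] .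
        moreover have exk: "ex k = Suc (5*m+3)" using Suc exS by simp
        ultimately show ?thesis unfolding exk LpS using Suc by simp
      qed
    qed
  qed
qed

end



lemma alg_R0: fixes R0 Rm Rm' x D Del c :: complex
  assumes "2*Rm*R0 + Rm' = 0" "2*Rm*Rm' = 12*x*(-(x^2)/D) + 1" "Rm^2 = Del" "D = x*Del"
    "D = 4*x^3 - c" "Rm \<noteq> 0" "x \<noteq> 0" "Del \<noteq> 0"
  shows "R0 = (c/4*x + 2*x^4) / D^2"
proof -
  have D: "D \<noteq> 0" using assms by simp
  have "Rm' = -(2*Rm*R0)" using assms(1) by algebra
  then have "R0 = -Rm'/(2*Rm)" using assms(6) by (simp add: field_simps)
  also have "\<dots> = -(2*Rm*Rm')/(4*Rm^2)" using assms(6) by (simp add: field_simps power2_eq_square)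
  also have "\<dots> = -(12*x*(-(x^2)/D) + 1)/(4*Del)" using assms(2,3) by simp
  also have "\<dots> = x*(12*x^3 - D)/(4*D^2)" using assms(4,7,8) D by (simp add: field_simps power2_eq_square power3_eq_cube)
  also have "\<dots> = x*(8*x^3 + c)/(4*D^2)" using assms(5) by simp
  also have "\<dots> = (c/4*x + 2*x^4) / D^2" using D by (simp add: field_simps power_Suc power_Suc2 numeral_eq_Suc)
  finally show ?thesis .
qed

lemma alg_odd_step: fixes R Rm I D x Del :: complex
  assumes "2*Rm*R = I/D^N" "Rm^2 = Del" "D = x*Del" "Rm \<noteq> 0" "x \<noteq> 0" "Del \<noteq> 0"
  shows "R = x*Rm*((1/2)*I)/D^(Suc N)"
proof -
  have D: "D \<noteq> 0" using assms by simp
  have "R = I/(2*Rm*D^N)" using assms(1,4) D by (simp add: field_simps)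
  also have "\<dots> = I*Rm/(2*Rm^2*D^N)" using assms(4) by (simp add: field_simps power2_eq_square)
  also have "\<dots> = x*Rm*((1/2)*I)/D^(Suc N)" using assms(2,3,5,6) D by (simp add: field_simps)
  finally show ?thesis .
qed

lemma cancel_Rm: fixes Rm R A B :: complex
  assumes "2*Rm*R = -(Rm*A/B)" "Rm \<noteq> 0" shows "R = (-1/2)*A/B"
proof (cases "B = 0")
  case True then show ?thesis using assms by simp
next
  case False
  have "B*(R*(Rm*2)) = -(A*Rm)" using assms False by (simp add: field_simps)
  then have "(B*(R*2) + A)*Rm = 0" by algebra
  then have "B*(R*2) + A = 0" using assms(2) by simp
  then have "B*(R*2) = -A" by algebra
  then show ?thesis using False by (simp add: field_simps)
qed

lemma alg_even_step: fixes R Rm RS dR S P0 Q Qp x D :: complex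
  assumes "2*Rm*R + RS + dR = 6*0" "RS = x*Rm*S/D^N" "dR = -2*Rm*(P0/D^2)*(Q/D^M) + Qp/D^N*Rm"
    "M + 2 = N" "Rm \<noteq> 0" "D \<noteq> 0"
  shows "R = (-1/2)*(x*S - 2*(P0*Q) + Qp)/D^N"
proof -
  have "dR = Rm*(-2*(P0*Q) + Qp)/D^N" unfolding assms(3) assms(4)[symmetric] power_add using assms(6)
    by (simp add: field_simps)
  moreover have "2*Rm*R = -RS - dR" using assms(1) by algebra
  ultimately have "2*Rm*R = -(x*Rm*S/D^N) - Rm*(-2*(P0*Q) + Qp)/D^N" using assms(2) by simp
  also have "\<dots> = -(Rm*(x*S - 2*(P0*Q) + Qp)/D^N)" using assms(6) by (simp add: field_simps)
  finally have "2*Rm*R = -(Rm*(x*S - 2*(P0*Q) + Qp)/D^N)" .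
  then show ?thesis using cancel_Rm assms(5) by blast
qed

lemma alg_oddodd: fixes x Rm E1 E2 D Del :: complex
  assumes "Rm^2 = Del" "D = x*Del" "D \<noteq> 0" "r1 + r2 = Suc N"
  shows "x*Rm*E1/D^r1 * (x*Rm*E2/D^r2) = x*E1*E2/D^N"
proof -
  have "x*Rm*E1/D^r1 * (x*Rm*E2/D^r2) = x*x*Rm^2*E1*E2/D^(Suc N)"
    unfolding assms(4)[symmetric] by (simp add: power_add field_simps power2_eq_square)
  also have "\<dots> = x*E1*E2/D^N"
  proof -
    have "x \<noteq> 0" "Del \<noteq> 0" using assms(2,3) by auto
    then show ?thesis unfolding assms(1) assms(2) by (simp add: field_simps)
  qed
  finally show ?thesis .
qed

lemma sum_rep: fixes g :: "nat \<Rightarrow> complex poly poly"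
  assumes "\<And>i. i \<in> S \<Longrightarrow> f i = K * eval2 (g i) y c / D"
  shows "sum f S = K * eval2 (sum g S) y c / D"
  using assms by (simp add: eval2_sum sum_divide_distrib sum_distrib_left)

context sett begin

lemma Rm1_hol: "Rm1 holomorphic_on U" using rs unfolding R_sol_def by blast
lemma R_hol: "R k holomorphic_on U" using rs unfolding R_sol_def by blast
lemma rs_sq: "t \<in> U \<Longrightarrow> (Rm1 t)^2 = 6 * (lam 0 t)^2 + t" using rs unfolding R_sol_def by blast
lemma rs_0: "t \<in> U \<Longrightarrow> 2 * Rm1 t * R 0 t + deriv Rm1 t = 0" using rs unfolding R_sol_def by blast
lemma rs_k: "t \<in> U \<Longrightarrow> 2 * Rm1 t * R (Suc k) t + (\<Sum>k1\<le>k. R k1 t * R (k - k1) t) + deriv (R k) t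
        = 6 * (\<Sum>l1\<le>k+2. lam l1 t * lam (k + 2 - l1) t)" using rs unfolding R_sol_def by blast

lemma Rm1_nz: "t \<in> U \<Longrightarrow> Rm1 t \<noteq> 0" using rs_sq[of t] nz by auto

lemma Rm1_deriv: "t \<in> U \<Longrightarrow> (Rm1 has_field_derivative deriv Rm1 t) (at t)"
  using holomorphic_on_imp_differentiable_at[OF Rm1_hol U] DERIV_deriv_iff_field_differentiable by blast

lemma R0_val: assumes t: "t \<in> U" shows "R 0 t = E Rp0 t / Dt t ^ 2"
proof -
  let ?x = "lam 0 t" and ?r = "deriv Rm1 t"
  have g1: "((\<lambda>s. (Rm1 s)^2) has_field_derivative of_nat 2 * (?r * (Rm1 t)^(2 - Suc 0))) (at t)"
    by (rule DERIV_power Rm1_deriv[OF t])+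
  have g2: "((\<lambda>s. 6 * (lam 0 s)^2 + s) has_field_derivative 12*?x*(-(?x^2)/Dt t) + 1) (at t)"
    by (rule derivative_eq_intros lam0_deriv[OF t] | simp)+
  have g1': "((\<lambda>s. 6 * (lam 0 s)^2 + s) has_field_derivative of_nat 2 * (?r * (Rm1 t)^(2 - Suc 0))) (at t)"
    using has_field_derivative_transform_within_open[OF g1 U t] rs_sq by simp
  have "2*Rm1 t*?r = 12*?x*(-(?x^2)/Dt t) + 1" using DERIV_unique[OF g1' g2] by (simp add: algebra_simps)
  moreover have "E Rp0 t = c/4*?x + 2*?x^4" by (simp add: Rp0_def eval2_pCons algebra_simps power4_eq_xxxx)
  ultimately show ?thesis
    using alg_R0[OF rs_0[OF t] _ rs_sq[OF t] Dt_eq[OF t] refl Rm1_nz[OF t] lam0_nz[OF t]] nz t by simp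
qed

end



lemma rex_even: "rex (2*a) = 5*a+2" by (simp add: rex_def)
lemma rex_odd: "rex (2*a+1) = 5*a+5" by (simp add: rex_def)
lemma rex_odd': "rex (Suc (2*a)) = 5*a+5" by (simp add: rex_def)

lemma frac_eo: fixes D :: complex assumes "r1 + r2 = N" "D \<noteq> 0"
  shows "E1/D^r1 * (x*Rm*E2/D^r2) = x*Rm*(E1*E2)/D^N"
  using assms(2) unfolding assms(1)[symmetric] by (simp add: power_add field_simps)
lemma frac_oe: fixes D :: complex assumes "r1 + r2 = N" "D \<noteq> 0"
  shows "(x*Rm*E1/D^r1) * (E2/D^r2) = x*Rm*(E1*E2)/D^N"
  using assms(2) unfolding assms(1)[symmetric] by (simp add: power_add field_simps)
lemma frac_lin3: fixes D :: complex shows "6*(1*A/D) - (1*B/D + C/D) = (6*A - B - C)/D"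
  by (simp add: field_simps diff_divide_distrib add_divide_distrib)

context sett begin

lemma lam_val: "t \<in> U \<Longrightarrow> lam k t = E (Lp k) t / Dt t ^ ex k" using lam_rep by blast
lemma lam_odd: "t \<in> U \<Longrightarrow> odd k \<Longrightarrow> lam k t = 0" using lam_val[of t k] Lp_odd[of k] by simp

lemma R_rep: "\<forall>t\<in>U. R k t = (if even k then E (Rp k) t / Dt t ^ rex k
                                  else lam 0 t * Rm1 t * E (Rp k) t / Dt t ^ rex k)"
proof (induction k rule: less_induct)
  case (less k)
  show ?case
  proof (cases k)
    case 0 then show ?thesis using R0_val by (simp add: rex_def power2_eq_square)
  next
    case (Suc j)
    have IHe: "R i s = E (Rp i) s / Dt s ^ rex i" if "i \<le> j" "even i" "s \<in> U" for i s
    proof -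
      have "i < k" using Suc that by simp
      then show ?thesis using less.IH that by auto
    qed
    have IHo: "R i s = lam 0 s * Rm1 s * E (Rp i) s / Dt s ^ rex i" if "i \<le> j" "odd i" "s \<in> U" for i s
    proof -
      have "i < k" using Suc that by simp
      then show ?thesis using less.IH that by auto
    qed
    show ?thesis
    proof
      fix t assume t: "t \<in> U"
      let ?x = "lam 0 t"
      note eq = rs_k[OF t, of j]
      have Dnz: "Dt t \<noteq> 0" using Dt_nz[OF t] .
      show "R k t = (if even k then E (Rp k) t / Dt t ^ rex k else lam 0 t * Rm1 t * E (Rp k) t / Dt t ^ rex k)"
      proof (cases "even j")
        case True
        then obtain n where j: "j = 2*n" by (auto elim!: evenE)
        have rj: "rex j = 5*n+2" using j by (simp add: rex_def)
        have r4: "rex j + 2 = 5*n+4" using rj by simp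
        have "\<forall>s\<in>U. R j s = E (Rp j) s / Dt s ^ rex j" using IHe[of j] True by simp
        from rep_deriv'[OF this t] have dR: "deriv (R j) t = E (dv (rex j) (Rp j)) t / Dt t ^ (5*n+4)"
          unfolding r4 .
        have RS: "(\<Sum>k1\<le>j. R k1 t * R (j-k1) t) = 1 * E (\<Sum>k1\<le>j. if even k1 then Rp k1 * Rp (j-k1) else Xp * Rp k1 * Rp (j-k1)) t / Dt t ^ (5*n+4)"
        proof (rule sum_rep)
          fix i assume i: "i \<in> {..j}"
          show "R i t * R (j-i) t = 1 * E (if even i then Rp i * Rp (j-i) else Xp * Rp i * Rp (j-i)) t / Dt t ^ (5*n+4)"
          proof (cases "even i")
            case True
            then obtain a where a: "i = 2*a" by (auto elim!: evenE)
            have ji: "j - i = 2*(n-a)" using a j by auto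
            have r: "rex i + rex (j-i) + 0 = 5*n+4" using a ji i j by (simp add: rex_even)
            have "R i t * R (j-i) t = E (Rp i) t / Dt t ^ rex i * (E (Rp (j-i)) t / Dt t ^ rex (j-i))"
              using IHe[of i t] IHe[of "j-i" t] True ji i t by simp
            also have "\<dots> = E (Rp i) t * E (Rp (j-i)) t * Dt t ^ 0 / Dt t ^ (5*n+4)"
              by (rule frac2[OF Dnz r])
            finally show ?thesis using True by simp
          next
            case False
            then obtain a where a: "i = 2*a+1" by (metis oddE)
            have ji: "j - i = 2*(n-a-1)+1" using a j i by auto
            have r: "rex i + rex (j-i) = Suc (5*n+4)" using a ji i j by (simp add: rex_odd')
            have "R i t * R (j-i) t = ?x * Rm1 t * E (Rp i) t / Dt t ^ rex i * (?x * Rm1 t * E (Rp (j-i)) t / Dt t ^ rex (j-i))"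
              using IHo[of i t] IHo[of "j-i" t] False ji i t by simp
            also have "\<dots> = ?x * E (Rp i) t * E (Rp (j-i)) t / Dt t ^ (5*n+4)"
              by (rule alg_oddodd[OF rs_sq[OF t] Dt_eq[OF t] Dnz r])
            finally show ?thesis using False by simp
          qed
        qed
        have LS: "(\<Sum>l\<le>j+2. lam l t * lam (j+2-l) t) = 1 * E (\<Sum>l\<le>j+2. Lp l * Lp (j+2-l) * Dp ^ (rex j + 2 - ex l - ex (j+2-l))) t / Dt t ^ (5*n+4)"
        proof (rule sum_rep)
          fix l assume l: "l \<in> {..j+2}"
          show "lam l t * lam (j+2-l) t = 1 * E (Lp l * Lp (j+2-l) * Dp ^ (rex j + 2 - ex l - ex (j+2-l))) t / Dt t ^ (5*n+4)"
          proof (cases "even l")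
            case False
            then show ?thesis using lam_odd[OF t] Lp_odd by simp
          next
            case True
            then obtain a where a: "l = 2*a" by (auto elim!: evenE)
            have l2: "j + 2 - l = 2*(Suc n - a)" using a l j by auto
            have e: "ex l + ex (j+2-l) \<le> 5*n + 4" using ex2[of a "Suc n - a" n] a l2 l j by auto
            have r: "ex l + ex (j+2-l) + (rex j + 2 - ex l - ex (j+2-l)) = 5*n+4" using e rj by simp
            have "lam l t * lam (j+2-l) t = E (Lp l) t / Dt t ^ ex l * (E (Lp (j+2-l)) t / Dt t ^ ex (j+2-l))"
              using lam_val[OF t, of l] lam_val[OF t, of "j+2-l"] by simp
            also have "\<dots> = E (Lp l) t * E (Lp (j+2-l)) t * Dt t ^ (rex j + 2 - ex l - ex (j+2-l)) / Dt t ^ (5*n+4)"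
              by (rule frac2[OF Dnz r])
            finally show ?thesis by simp
          qed
        qed
        define LSp where "LSp = (\<Sum>l\<le>j+2. Lp l * Lp (j+2-l) * Dp ^ (rex j + 2 - ex l - ex (j+2-l)))"
        define RSp where "RSp = (\<Sum>k1\<le>j. if even k1 then Rp k1 * Rp (j-k1) else Xp * Rp k1 * Rp (j-k1))"
        have "2 * Rm1 t * R (Suc j) t = 6*(1 * E LSp t / Dt t ^ (5*n+4)) - (1 * E RSp t / Dt t ^ (5*n+4) + E (dv (rex j) (Rp j)) t / Dt t ^ (5*n+4))"
          using eq unfolding LS RS dR LSp_def RSp_def by (simp add: algebra_simps)
        also have "\<dots> = (6 * E LSp t - E RSp t - E (dv (rex j) (Rp j)) t) / Dt t ^ (5*n+4)"
          by (rule frac_lin3)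
        finally have "R (Suc j) t = ?x * Rm1 t * ((1/2) * (6 * E LSp t - E RSp t - E (dv (rex j) (Rp j)) t)) / Dt t ^ Suc (5*n+4)"
          by (rule alg_odd_step[OF _ rs_sq[OF t] Dt_eq[OF t] Rm1_nz[OF t] lam0_nz[OF t]]) (use nz t in auto)
        moreover have "Rp (Suc j) = smult [:1/2:] (smult [:6:] LSp - RSp - dv (rex j) (Rp j))"
          using True unfolding LSp_def RSp_def by simp
        moreover have "rex (Suc j) = Suc (5*n+4)" using j by (simp add: rex_def)
        ultimately show ?thesis using Suc True by simp
      next
        case False
        then obtain n where j: "j = 2*n+1" by (metis oddE)
        have rj: "rex j = 5*n+5" using j by (simp add: rex_def)
        have LS: "(\<Sum>l\<le>j+2. lam l t * lam (j+2-l) t) = 0"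
        proof (rule sum.neutral, rule ballI)
          fix l assume l: "l \<in> {..j+2}"
          have "odd l \<or> odd (j+2-l)" using l j by auto
          then show "lam l t * lam (j+2-l) t = 0" using lam_odd[OF t] by (elim disjE) auto
        qed
        define S where "S = (\<Sum>k1\<le>j. Rp k1 * Rp (j-k1))"
        have RS: "(\<Sum>k1\<le>j. R k1 t * R (j-k1) t) = ?x * Rm1 t * E S t / Dt t ^ (5*n+7)"
          unfolding S_def
        proof (rule sum_rep)
          fix i assume i: "i \<in> {..j}"
          show "R i t * R (j-i) t = ?x * Rm1 t * E (Rp i * Rp (j-i)) t / Dt t ^ (5*n+7)"
          proof (cases "even i")
            case True
            then obtain a where a: "i = 2*a" by (auto elim!: evenE)
            have ji: "j - i = 2*(n-a)+1" using a j i by auto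
            have r: "rex i + rex (j-i) = 5*n+7" using a ji i j by (simp add: rex_even rex_odd')
            have "R i t * R (j-i) t = E (Rp i) t / Dt t ^ rex i * (?x * Rm1 t * E (Rp (j-i)) t / Dt t ^ rex (j-i))"
              using IHe[of i t] IHo[of "j-i" t] True ji i t by simp
            also have "\<dots> = ?x * Rm1 t * (E (Rp i) t * E (Rp (j-i)) t) / Dt t ^ (5*n+7)"
              by (rule frac_eo[OF r Dnz])
            finally show ?thesis by simp
          next
            case False
            then obtain a where a: "i = 2*a+1" by (metis oddE)
            have ji: "j - i = 2*(n-a)" using a j i by auto
            have r: "rex i + rex (j-i) = 5*n+7" using a ji i j by (simp add: rex_even rex_odd')
            have "R i t * R (j-i) t = ?x * Rm1 t * E (Rp i) t / Dt t ^ rex i * (E (Rp (j-i)) t / Dt t ^ rex (j-i))"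
              using IHo[of i t] IHe[of "j-i" t] False ji i t by simp
            also have "\<dots> = ?x * Rm1 t * (E (Rp i) t * E (Rp (j-i)) t) / Dt t ^ (5*n+7)"
              by (rule frac_oe[OF r Dnz])
            finally show ?thesis by simp
          qed
        qed
        define G where "G s = E (Xp * Rp j) s / Dt s ^ rex j" for s
        have Rj: "\<forall>s\<in>U. R j s = Rm1 s * G s" using IHo[of j] False by (simp add: G_def)
        have dG: "(G has_field_derivative E (dv (rex j) (Xp * Rp j)) t / Dt t ^ (rex j + 2)) (at t)"
          unfolding G_def by (rule key[OF t])
        have "((\<lambda>s. Rm1 s * G s) has_field_derivative deriv Rm1 t * G t + E (dv (rex j) (Xp * Rp j)) t / Dt t ^ (rex j + 2) * Rm1 t) (at t)"
          by (rule DERIV_mult[OF Rm1_deriv[OF t] dG])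
        then have "(R j has_field_derivative deriv Rm1 t * G t + E (dv (rex j) (Xp * Rp j)) t / Dt t ^ (rex j + 2) * Rm1 t) (at t)"
          by (rule has_field_derivative_transform_within_open[OF _ U t]) (use Rj in simp)
        then have dR: "deriv (R j) t = -2 * Rm1 t * (E Rp0 t / Dt t ^ 2) * (E (Xp * Rp j) t / Dt t ^ rex j)
             + E (dv (rex j) (Xp * Rp j)) t / Dt t ^ (5*n+7) * Rm1 t"
        proof -
          assume h: "(R j has_field_derivative deriv Rm1 t * G t + E (dv (rex j) (Xp * Rp j)) t / Dt t ^ (rex j + 2) * Rm1 t) (at t)"
          have "deriv Rm1 t = -2 * Rm1 t * R 0 t" using rs_0[OF t] by algebra
          have r7: "rex j + 2 = 5*n+7" using rj by simp
          then show ?thesis using DERIV_imp_deriv[OF h[unfolded r7]] R0_val[OF t] \<open>deriv Rm1 t = -2 * Rm1 t * R 0 t\<close>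
            by (simp add: G_def)
        qed
        have eq2: "2 * Rm1 t * R (Suc j) t + ?x * Rm1 t * E S t / Dt t ^ (5*n+7) + deriv (R j) t = 6 * 0"
          using eq unfolding LS RS S_def .
        have "R (Suc j) t = (-1/2) * (?x * E S t - 2 * (E Rp0 t * E (Xp * Rp j) t) + E (dv (rex j) (Xp * Rp j)) t) / Dt t ^ (5*n+7)"
          by (rule alg_even_step[OF eq2 refl dR]) (use rj Rm1_nz[OF t] Dnz in auto)
        moreover have "Rp (Suc j) = smult [:-1/2:] (Xp * S - smult [:2:] (Rp0 * Xp * Rp j) + dv (rex j) (Xp * Rp j))"
          using False unfolding S_def by simp
        moreover have "rex (Suc j) = 5*n+7" using j by (simp add: rex_def)
        ultimately show ?thesis using Suc False by (simp add: algebra_simps)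
      qed
    qed
  qed
qed

end

theorem mainTheorem19:
  fixes n :: nat
  shows "\<exists>qe qo :: complex poly poly.
           degree qe \<le> 9 * n + 4 \<and> degree qo \<le> 9 * n + 8 \<and>
           (\<forall>(c::complex) (U::complex set) lam nu Rm1 R.
              open U \<longrightarrow> zero_param_sol c U lam nu \<longrightarrow> R_sol U lam Rm1 R \<longrightarrow>
              (\<forall>t\<in>U. lam 0 t \<noteq> 0 \<and> 6 * (lam 0 t)^2 + t \<noteq> 0) \<longrightarrow>
              (\<forall>t\<in>U.
                 R (2 * n) t = eval2 qe (lam 0 t) c / (4 * (lam 0 t)^3 - c) ^ (5 * n + 2) \<and>
                 R (2 * n + 1) t = lam 0 t * Rm1 t * eval2 qo (lam 0 t) c
                                   / (4 * (lam 0 t)^3 - c) ^ (5 * n + 5)))"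
  proof (rule exI[of _ "Rp (2*n)"], rule exI[of _ "Rp (2*n+1)"], intro conjI allI impI)
  show "degree (Rp (2*n)) \<le> 9 * n + 4" using Rp_deg[of "2*n"] by (simp add: rb_def)
  show "degree (Rp (2*n+1)) \<le> 9 * n + 8" using Rp_deg[of "2*n+1"] by (simp add: rb_def)
  fix c :: complex and U :: "complex set" and lam nu Rm1 R
  assume a: "open U" "zero_param_sol c U lam nu" "R_sol U lam Rm1 R"
    "\<forall>t\<in>U. lam 0 t \<noteq> 0 \<and> 6 * (lam 0 t)^2 + t \<noteq> 0"
  interpret sett c U lam nu Rm1 R by (unfold_locales) (use a in auto)
  show "\<forall>t\<in>U.
                 R (2 * n) t = eval2 (Rp (2*n)) (lam 0 t) c / (4 * (lam 0 t)^3 - c) ^ (5 * n + 2) \<and>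
                 R (2 * n + 1) t = lam 0 t * Rm1 t * eval2 (Rp (2*n+1)) (lam 0 t) c
                                   / (4 * (lam 0 t)^3 - c) ^ (5 * n + 5)"
    using R_rep[of "2*n"] R_rep[of "2*n+1"] by (simp add: rex_def)
qed

end
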